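(* Let $\langle X,d\rangle$ be a metric space. The following conditions are equivalent: (1) $X$ is cofinally Bourbaki quasi-complete; (2) $X$ is strongly uniformly locally bounded and, for every nowhere-vanishing real-valued strongly uniformly locally Lipschitz function $f$ on $X$, the reciprocal $1/f$ is strongly uniformly locally Lipschitz; (3) $X$ is strongly uniformly locally bounded and, for every nowhere-vanishing real-valued Lipschitz function $f$ on $X$, the reciprocal $1/f$ is strongly uniformly locally Lipschitz.
   Context: For $\varepsilon>0$, an $\varepsilon$-chain joining $x,y\in X$ is a finite sequence $x=x_0,\dots,x_n=y$ with $d(x_{i-1},x_i)<\varepsilon$. $S^\infty_d(x,\varepsilon)$ denotes the set of points of $X$ joinable to $x$ by an $\varepsilon$-chain. A sequence $\langle x_n\rangle$ is cofinally Bourbaki quasi-Cauchy if for every $\varepsilon>0$ there is an infinite $N_\varepsilon\subseteq\mathbb{N}$ such that any $x_j,x_k$ with $j,k\in N_\varepsilon$ can be joined by an $\varepsilon$-chain; $X$ is cofinally Bourbaki quasi-complete if every such sequence has a cluster point. $X$ is strongly uniformly locally bounded if there is $\delta>0$ such that $S^\infty_d(x,\delta)$ is bounded for all $x\in X$. A function $f:X\to\mathbb{R}$ is strongly uniformly locally Lipschitz (uniformly locally chain-Lipschitz) if there is $\delta>0$ such that for each $x\in X$ the restriction of $f$ to $S^\infty_d(x,\delta)$ is Lipschitz (constant may depend on $x$). *)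

theory Defs
  imports "HOL-Analysis.Analysis"
begin

definition eps_chain :: "real \<Rightarrow> 'a::metric_space \<Rightarrow> 'a \<Rightarrow> bool" where
  "eps_chain e x y \<longleftrightarrow>
     (\<exists>(n::nat) (c::nat \<Rightarrow> 'a). c 0 = x \<and> c n = y \<and> (\<forall>i\<in>{1..n}. dist (c (i - 1)) (c i) < e))"

definition chain_ball :: "'a::metric_space \<Rightarrow> real \<Rightarrow> 'a set" where
  "chain_ball x e = {y. eps_chain e x y}"

definition cofinally_bourbaki_quasi_cauchy :: "(nat \<Rightarrow> 'a::metric_space) \<Rightarrow> bool" where
  "cofinally_bourbaki_quasi_cauchy s \<longleftrightarrow>
     (\<forall>e>0. \<exists>N::nat set. infinite N \<and> (\<forall>j\<in>N. \<forall>k\<in>N. eps_chain e (s j) (s k)))"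

definition cluster_point_seq :: "(nat \<Rightarrow> 'a::metric_space) \<Rightarrow> 'a \<Rightarrow> bool" where
  "cluster_point_seq s p \<longleftrightarrow> (\<forall>e>0. infinite {n. dist (s n) p < e})"

definition cofinally_bourbaki_quasi_complete :: "'a::metric_space itself \<Rightarrow> bool" where
  "cofinally_bourbaki_quasi_complete TYPE('a) \<longleftrightarrow>
     (\<forall>s::nat \<Rightarrow> 'a. cofinally_bourbaki_quasi_cauchy s \<longrightarrow> (\<exists>p. cluster_point_seq s p))"

definition strongly_uniformly_locally_bounded :: "'a::metric_space itself \<Rightarrow> bool" where
  "strongly_uniformly_locally_bounded TYPE('a) \<longleftrightarrow>
     (\<exists>\<delta>>0. \<forall>x::'a. bounded (chain_ball x \<delta>))"

definition strongly_uniformly_locally_lipschitz :: "('a::metric_space \<Rightarrow> real) \<Rightarrow> bool" where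
  "strongly_uniformly_locally_lipschitz f \<longleftrightarrow>
     (\<exists>\<delta>>0. \<forall>x. \<exists>K. K-lipschitz_on (chain_ball x \<delta>) f)"

end

theory Submission
  imports Defs
begin


lemma chain_refl: "eps_chain e x x"
  unfolding eps_chain_def by (rule exI[of _ 0], rule exI[of _ "\<lambda>_. x"]) simp

lemma chain_step: "dist x y < e \<Longrightarrow> eps_chain e x y"
  unfolding eps_chain_def
  by (rule exI[of _ 1], rule exI[of _ "\<lambda>i. if i = 0 then x else y"]) simp

lemma chain_mono: "eps_chain e x y \<Longrightarrow> e \<le> e' \<Longrightarrow> eps_chain e' x y"
  unfolding eps_chain_def by (metis (no_types, lifting) less_le_trans)

lemma chain_sym: assumes "eps_chain e x y" shows "eps_chain e y x"
proof -
  obtain n :: nat and c where c: "c 0 = x" "c n = y" "\<forall>i\<in>{1..n}. dist (c (i - 1)) (c i) < e"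
    using assms unfolding eps_chain_def by blast
  have "\<forall>i\<in>{1..n}. dist (c (n - (i - 1))) (c (n - i)) < e"
  proof
    fix i assume i: "i \<in> {1..n}"
    have "n - i + 1 \<in> {1..n}" using i by auto
    then have "dist (c (n - i + 1 - 1)) (c (n - i + 1)) < e" using c(3) by blast
    moreover have "n - i + 1 = n - (i - 1)" using i by auto
    ultimately show "dist (c (n - (i - 1))) (c (n - i)) < e" by (simp add: dist_commute)
  qed
  then show ?thesis unfolding eps_chain_def using c
    by (intro exI[of _ n] exI[of _ "\<lambda>i. c (n - i)"]) auto
qed

lemma chain_trans: assumes "eps_chain e x y" "eps_chain e y z" shows "eps_chain e x z"
proof -
  obtain n :: nat and c where c: "c 0 = x" "c n = y" "\<forall>i\<in>{1..n}. dist (c (i - 1)) (c i) < e"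
    using assms(1) unfolding eps_chain_def by blast
  obtain m :: nat and d where d: "d 0 = y" "d m = z" "\<forall>i\<in>{1..m}. dist (d (i - 1)) (d i) < e"
    using assms(2) unfolding eps_chain_def by blast
  define g where "g i = (if i \<le> n then c i else d (i - n))" for i
  have "\<forall>i\<in>{1..n+m}. dist (g (i - 1)) (g i) < e"
  proof
    fix i assume i: "i \<in> {1..n+m}"
    show "dist (g (i - 1)) (g i) < e"
    proof (cases "i \<le> n")
      case True then show ?thesis using c(3) i by (auto simp: g_def)
    next
      case False
      then have "i - n \<in> {1..m}" using i by auto
      then have "dist (d (i - n - 1)) (d (i - n)) < e" using d(3) by blast
      moreover have "g (i - 1) = d (i - n - 1)" using False c(2) d(1)
        by (cases "i = Suc n") (auto simp: g_def)
      moreover have "g i = d (i - n)" using False by (simp add: g_def)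
      ultimately show ?thesis by simp
    qed
  qed
  moreover have "g 0 = x" "g (n+m) = z" using c d by (auto simp: g_def)
  ultimately show ?thesis unfolding eps_chain_def by blast
qed

lemma chain_ball_pair: "y \<in> chain_ball x e \<Longrightarrow> z \<in> chain_ball x e \<Longrightarrow> eps_chain e y z"
  unfolding chain_ball_def by (auto intro: chain_trans chain_sym)

lemma chain_ball_mono: "e \<le> e' \<Longrightarrow> chain_ball x e \<subseteq> chain_ball x e'"
  unfolding chain_ball_def by (auto intro: chain_mono)

lemma ball_sub_chain_ball: "dist x y < e \<Longrightarrow> y \<in> chain_ball x e"
  unfolding chain_ball_def by (auto intro: chain_step)



lemma bad_lemma:
  fixes P :: "nat \<Rightarrow> 'a::metric_space \<Rightarrow> bool"
  assumes cbqc: "cofinally_bourbaki_quasi_complete TYPE('a)"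
    and loc: "\<And>p. \<exists>e>0. \<exists>M. \<forall>i\<ge>M. \<forall>y. dist y p < e \<longrightarrow> \<not> P i y"
    and bad: "\<And>\<delta>. \<delta> > 0 \<Longrightarrow> \<exists>x. \<forall>i. \<exists>y\<in>chain_ball x \<delta>. P i y"
  shows False
proof -
  define X where "X n = (SOME x. \<forall>i. \<exists>y\<in>chain_ball x (1 / (real n + 1)). P i y)" for n
  have X: "\<forall>i. \<exists>y\<in>chain_ball (X n) (1 / (real n + 1)). P i y" for n
    unfolding X_def by (rule someI_ex) (rule bad, simp)
  define s where "s i = (SOME y. y \<in> chain_ball (X (fst (prod_decode i))) (1 / (real (fst (prod_decode i)) + 1)) \<and> P i y)" for i
  have s: "s i \<in> chain_ball (X (fst (prod_decode i))) (1 / (real (fst (prod_decode i)) + 1)) \<and> P i (s i)" for i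
    unfolding s_def by (rule someI_ex) (use X in blast)
  have "cofinally_bourbaki_quasi_cauchy s"
    unfolding cofinally_bourbaki_quasi_cauchy_def
  proof (intro allI impI)
    fix e :: real assume e: "e > 0"
    obtain n :: nat where n: "1 / (real n + 1) < e"
      using e by (metis nat_approx_posE of_nat_Suc add.commute)
    let ?N = "range (\<lambda>k. prod_encode (n, k))"
    have "infinite ?N"
      by (rule range_inj_infinite) (simp add: inj_on_def prod_encode_eq)
    moreover have "\<forall>j\<in>?N. \<forall>k\<in>?N. eps_chain e (s j) (s k)"
    proof (intro ballI)
      fix j k assume "j \<in> ?N" "k \<in> ?N"
      then have "fst (prod_decode j) = n" "fst (prod_decode k) = n" by auto
      then have "s j \<in> chain_ball (X n) (1 / (real n + 1))" "s k \<in> chain_ball (X n) (1 / (real n + 1))"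
        using s[of j] s[of k] by auto
      then have "eps_chain (1 / (real n + 1)) (s j) (s k)" by (rule chain_ball_pair)
      then show "eps_chain e (s j) (s k)" using n by (auto intro: chain_mono)
    qed
    ultimately show "\<exists>N. infinite N \<and> (\<forall>j\<in>N. \<forall>k\<in>N. eps_chain e (s j) (s k))" by blast
  qed
  then obtain p where p: "cluster_point_seq s p"
    using cbqc unfolding cofinally_bourbaki_quasi_complete_def by blast
  obtain e M where e: "e > 0" and M: "\<forall>i\<ge>M. \<forall>y. dist y p < e \<longrightarrow> \<not> P i y"
    using loc[of p] by blast
  have "{n. dist (s n) p < e} \<subseteq> {..<M}"
    using M s by (auto simp: not_less[symmetric])
  then have "finite {n. dist (s n) p < e}" using finite_subset by blast
  with p e show False unfolding cluster_point_seq_def by blast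
qed



lemma cbqc_sulb:
  assumes cbqc: "cofinally_bourbaki_quasi_complete TYPE('a::metric_space)"
  shows "strongly_uniformly_locally_bounded TYPE('a)"
proof (rule ccontr)
  assume nb: "\<not> ?thesis"
  obtain a :: 'a where True by blast
  have loc: "\<exists>e>0. \<exists>M. \<forall>i\<ge>M. \<forall>y. dist y p < e \<longrightarrow> \<not> dist a y > real i" for p
  proof -
    obtain M :: nat where M: "dist a p + 1 \<le> real M" using real_arch_simple by blast
    have "\<not> dist a y > real i" if "M \<le> i" "dist y p < 1" for i y
    proof -
      have "dist a y \<le> dist a p + dist p y" by (rule dist_triangle)
      moreover have "dist p y = dist y p" by (rule dist_commute)
      ultimately show ?thesis using M that by linarith
    qed
    then have "\<forall>i\<ge>M. \<forall>y. dist y p < 1 \<longrightarrow> \<not> dist a y > real i" by blast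
    then show ?thesis using zero_less_one by blast
  qed
  have bad: "\<exists>x. \<forall>i. \<exists>y\<in>chain_ball x \<delta>. dist a y > real i" if d: "\<delta> > 0" for \<delta>
  proof -
    obtain x :: 'a where nbx: "\<not> bounded (chain_ball x \<delta>)"
      using nb d unfolding strongly_uniformly_locally_bounded_def by blast
    have "\<exists>y\<in>chain_ball x \<delta>. dist a y > real i" for i
    proof (rule ccontr)
      assume "\<not> (\<exists>y\<in>chain_ball x \<delta>. dist a y > real i)"
      then have "\<forall>y\<in>chain_ball x \<delta>. dist a y \<le> real i" by (simp add: not_less)
      then have "bounded (chain_ball x \<delta>)" unfolding bounded_any_center[where a = a] by blast
      with nbx show False by blast
    qed
    then show ?thesis by blast
  qed
  show False by (rule bad_lemma[where P = "\<lambda>i y. dist a y > real i", OF cbqc loc bad])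
qed

lemma recip_lip:
  fixes f :: "'a::metric_space \<Rightarrow> real"
  assumes "K-lipschitz_on S f" "m > 0" "\<forall>y\<in>S. \<bar>f y\<bar> \<ge> m"
  shows "(K / m^2)-lipschitz_on S (\<lambda>x. 1 / f x)"
proof (rule lipschitz_onI)
  show "0 \<le> K / m^2" using lipschitz_on_nonneg[OF assms(1)] assms(2) by simp
  fix x y assume xy: "x \<in> S" "y \<in> S"
  have fx: "\<bar>f x\<bar> \<ge> m" and fy: "\<bar>f y\<bar> \<ge> m" using assms(3) xy by auto
  then have nz: "f x \<noteq> 0" "f y \<noteq> 0" using assms(2) by auto
  have "dist (1 / f x) (1 / f y) = \<bar>f y - f x\<bar> / (\<bar>f x\<bar> * \<bar>f y\<bar>)"
    using nz by (simp add: dist_real_def field_simps abs_mult[symmetric])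
  also have "\<dots> \<le> \<bar>f y - f x\<bar> / m^2"
  proof (rule divide_left_mono)
    show "m^2 \<le> \<bar>f x\<bar> * \<bar>f y\<bar>" using fx fy assms(2)
      by (simp add: power2_eq_square mult_mono)
  qed (use assms(2) nz in auto)
  also have "\<bar>f y - f x\<bar> \<le> K * dist x y"
    using lipschitz_onD[OF assms(1) xy] by (simp add: dist_real_def abs_minus_commute)
  then have "\<bar>f y - f x\<bar> / m^2 \<le> K * dist x y / m^2"
    using assms(2) by (simp add: divide_right_mono)
  finally show "dist (1 / f x) (1 / f y) \<le> K / m^2 * dist x y" by simp
qed

lemma loc_bound:
  fixes f :: "'a::metric_space \<Rightarrow> real"
  assumes K: "K-lipschitz_on (chain_ball p \<delta>0) f" and d0: "\<delta>0 > 0" and nz: "f p \<noteq> 0"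
  shows "\<exists>e>0. \<exists>M. \<forall>i\<ge>M. \<forall>y. dist y p < e \<longrightarrow> \<not> \<bar>f y\<bar> < 1 / (real i + 1)"
proof -
  have K0: "K \<ge> 0" using K lipschitz_on_nonneg by blast
  define a where "a = \<bar>f p\<bar>"
  have a: "a > 0" using nz by (simp add: a_def)
  define e where "e = min \<delta>0 (a / (2 * (K + 1)))"
  have e: "e > 0" using d0 a K0 by (simp add: e_def)
  obtain M :: nat where M: "2 / a \<le> real M" using real_arch_simple by blast
  have "\<not> \<bar>f y\<bar> < 1 / (real i + 1)" if i: "M \<le> i" and y: "dist y p < e" for i y
  proof -
    have "dist p y < \<delta>0" using y unfolding e_def by (simp add: dist_commute)
    then have yin: "y \<in> chain_ball p \<delta>0" by (rule ball_sub_chain_ball)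
    have pin: "p \<in> chain_ball p \<delta>0" by (simp add: chain_ball_def chain_refl)
    have "\<bar>f y - f p\<bar> \<le> K * dist y p"
      using lipschitz_onD[OF K yin pin] by (simp add: dist_real_def)
    also have "\<dots> \<le> K * (a / (2 * (K + 1)))"
      using y K0 by (intro mult_left_mono) (auto simp: e_def)
    also have "\<dots> = (a / 2) * (K / (K + 1))"
      using K0 by simp
    also have "\<dots> \<le> a / 2"
      using K0 a by (intro mult_left_le) auto
    finally have "\<bar>f y - f p\<bar> \<le> a / 2" .
    then have ge: "\<bar>f y\<bar> \<ge> a / 2" unfolding a_def by linarith
    have "2 / a \<le> real i + 1" using M i by linarith
    then have "1 / (real i + 1) \<le> a / 2" using a by (simp add: field_simps)
    with ge show ?thesis by linarith
  qed
  then show ?thesis using e by blast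
qed

lemma cbqc_recip:
  fixes f :: "'a::metric_space \<Rightarrow> real"
  assumes cbqc: "cofinally_bourbaki_quasi_complete TYPE('a)"
    and nz: "\<forall>x. f x \<noteq> 0" and sull: "strongly_uniformly_locally_lipschitz f"
  shows "strongly_uniformly_locally_lipschitz (\<lambda>x. 1 / f x)"
proof (rule ccontr)
  assume nr: "\<not> ?thesis"
  obtain \<delta>0 where d0: "\<delta>0 > 0" and L: "\<forall>x. \<exists>K. K-lipschitz_on (chain_ball x \<delta>0) f"
    using sull unfolding strongly_uniformly_locally_lipschitz_def by blast
  have loc: "\<exists>e>0. \<exists>M. \<forall>i\<ge>M. \<forall>y. dist y p < e \<longrightarrow> \<not> \<bar>f y\<bar> < 1 / (real i + 1)" for p
  proof -
    obtain K where K: "K-lipschitz_on (chain_ball p \<delta>0) f" using L by blast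
    show ?thesis by (rule loc_bound[OF K d0 nz[rule_format]])
  qed
  have bad: "\<exists>x. \<forall>i. \<exists>y\<in>chain_ball x \<delta>. \<bar>f y\<bar> < 1 / (real i + 1)" if d: "\<delta> > 0" for \<delta>
  proof -
    define d' where "d' = min \<delta> \<delta>0"
    have d': "d' > 0" using d d0 by (simp add: d'_def)
    then obtain x :: 'a where nl: "\<forall>K. \<not> K-lipschitz_on (chain_ball x d') (\<lambda>x. 1 / f x)"
      using nr unfolding strongly_uniformly_locally_lipschitz_def by blast
    obtain K where K: "K-lipschitz_on (chain_ball x \<delta>0) f" using L by blast
    have sub: "chain_ball x d' \<subseteq> chain_ball x \<delta>" by (rule chain_ball_mono) (simp add: d'_def)
    have K': "K-lipschitz_on (chain_ball x d') f"
      by (rule lipschitz_on_subset[OF K]) (rule chain_ball_mono, simp add: d'_def)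
    have "\<exists>y\<in>chain_ball x \<delta>. \<bar>f y\<bar> < 1 / (real i + 1)" for i
    proof (rule ccontr)
      assume na: "\<not> (\<exists>y\<in>chain_ball x \<delta>. \<bar>f y\<bar> < 1 / (real i + 1))"
      have lb: "\<forall>y\<in>chain_ball x d'. \<bar>f y\<bar> \<ge> 1 / (real i + 1)"
        using na sub by (meson not_less subsetD)
      have "(K / (1 / (real i + 1))^2)-lipschitz_on (chain_ball x d') (\<lambda>x. 1 / f x)"
        by (rule recip_lip[OF K' _ lb]) simp
      with nl show False by blast
    qed
    then show ?thesis by blast
  qed
  show False by (rule bad_lemma[where P = "\<lambda>i y. \<bar>f y\<bar> < 1 / (real i + 1)", OF cbqc loc bad])
qed



lemma three_to_one:
  assumes sulb: "strongly_uniformly_locally_bounded TYPE('a::metric_space)"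
    and H: "\<forall>f::'a \<Rightarrow> real. (\<forall>x. f x \<noteq> 0) \<and> (\<exists>K. K-lipschitz_on UNIV f)
                      \<longrightarrow> strongly_uniformly_locally_lipschitz (\<lambda>x. 1 / f x)"
  shows "cofinally_bourbaki_quasi_complete TYPE('a)"
  unfolding cofinally_bourbaki_quasi_complete_def
proof (intro allI impI)
  fix s :: "nat \<Rightarrow> 'a" assume cs: "cofinally_bourbaki_quasi_cauchy s"
  show "\<exists>p. cluster_point_seq s p"
  proof (rule ccontr)
    assume ncl: "\<not> (\<exists>p. cluster_point_seq s p)"
    define A where "A = range (\<lambda>n. (s n, 1 / (real n + 1)))"
    have Ane: "A \<noteq> {}" unfolding A_def by simp
    define f where "f x = infdist (x, 0::real) A" for x
    have lip: "1-lipschitz_on UNIV f"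
    proof (rule lipschitz_onI)
      fix x y :: 'a
      have "\<bar>infdist (x, 0::real) A - infdist (y, 0) A\<bar> \<le> dist (x, 0::real) (y, 0)"
        by (rule infdist_triangle_abs)
      also have "dist (x, 0::real) (y, 0) = dist x y" by (simp add: dist_Pair_Pair)
      finally show "dist (f x) (f y) \<le> 1 * dist x y" by (simp add: f_def dist_real_def)
    qed simp
    have fs: "f (s n) \<le> 1 / (real n + 1)" for n
    proof -
      have "(s n, 1 / (real n + 1)) \<in> A" unfolding A_def by blast
      then have "f (s n) \<le> dist (s n, 0::real) (s n, 1 / (real n + 1))"
        unfolding f_def by (rule infdist_le)
      also have "\<dots> = 1 / (real n + 1)" by (simp add: dist_Pair_Pair dist_real_def)
      finally show ?thesis .
    qed
    have fpos: "f x > 0" for x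
    proof -
      have "f x \<ge> 0" unfolding f_def by (rule infdist_nonneg)
      moreover have "f x \<noteq> 0"
      proof
        assume "f x = 0"
        then have cl: "(x, 0::real) \<in> closure A"
          using in_closure_iff_infdist_zero[OF Ane] unfolding f_def by blast
        have "cluster_point_seq s x"
          unfolding cluster_point_seq_def
        proof (intro allI impI)
          fix e :: real assume e: "e > 0"
          have "\<exists>n\<ge>m. n \<in> {n. dist (s n) x < e}" for m
          proof -
            have "min e (1 / (real m + 1)) > 0" using e by simp
            then obtain y where y: "y \<in> A" "dist y (x, 0) < min e (1 / (real m + 1))"
              using cl unfolding closure_approachable by blast
            then obtain n where yn: "y = (s n, 1 / (real n + 1))" unfolding A_def by blast
            have "dist (s n) x \<le> dist y (x, 0)" using dist_fst_le[of y "(x, 0)"] yn by simp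
            then have d1: "dist (s n) x < e" using y by simp
            have "dist (1 / (real n + 1)) 0 \<le> dist y (x, 0)"
              using dist_snd_le[of y "(x, 0::real)"] yn by simp
            then have "1 / (real n + 1) < 1 / (real m + 1)" using y by (simp add: dist_real_def)
            then have lt: "1 / (real n + 1) < 1 / (real m + 1)" .
            have "real m < real n"
            proof (rule ccontr)
              assume "\<not> real m < real n"
              then have "real n + 1 \<le> real m + 1" by simp
              then have "1 / (real m + 1) \<le> 1 / (real n + 1)"
                by (intro divide_left_mono) auto
              with lt show False by simp
            qed
            then have "m \<le> n" by simp
            with d1 show ?thesis by blast
          qed
          then show "infinite {n. dist (s n) x < e}"
            using infinite_nat_iff_unbounded_le by blast
        qed
        with ncl show False by blast
      qed
      ultimately show ?thesis by simp
    qed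
    have "strongly_uniformly_locally_lipschitz (\<lambda>x. 1 / f x)"
      using H lip fpos by (metis less_irrefl)
    then obtain \<delta>0 where d0: "\<delta>0 > 0" and L: "\<forall>x. \<exists>K. K-lipschitz_on (chain_ball x \<delta>0) (\<lambda>x. 1 / f x)"
      unfolding strongly_uniformly_locally_lipschitz_def by blast
    obtain \<delta>b where db: "\<delta>b > 0" and Bd: "\<forall>x::'a. bounded (chain_ball x \<delta>b)"
      using sulb unfolding strongly_uniformly_locally_bounded_def by blast
    define \<delta> where "\<delta> = min \<delta>0 \<delta>b"
    have d: "\<delta> > 0" using d0 db by (simp add: \<delta>_def)
    obtain N where N: "infinite N" and NC: "\<forall>j\<in>N. \<forall>k\<in>N. eps_chain \<delta> (s j) (s k)"
      using cs d unfolding cofinally_bourbaki_quasi_cauchy_def by blast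
    obtain j0 where j0: "j0 \<in> N" using N by (metis finite.emptyI ex_in_conv)
    define x0 where "x0 = s j0"
    obtain K where K: "K-lipschitz_on (chain_ball x0 \<delta>0) (\<lambda>x. 1 / f x)" using L by blast
    obtain B where B: "\<forall>y\<in>chain_ball x0 \<delta>b. dist x0 y \<le> B"
      using spec[OF Bd, of x0] unfolding bounded_any_center[where a = x0] by blast
    have K0: "K \<ge> 0" using K lipschitz_on_nonneg by blast
    have bnd: "real j + 1 \<le> 1 / f x0 + K * B" if j: "j \<in> N" for j
    proof -
      have inC: "s j \<in> chain_ball x0 \<delta>" using NC j0 j unfolding chain_ball_def x0_def by blast
      have in0: "s j \<in> chain_ball x0 \<delta>0" using inC chain_ball_mono[of \<delta> \<delta>0 x0] by (auto simp: \<delta>_def)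
      have inb: "s j \<in> chain_ball x0 \<delta>b" using inC chain_ball_mono[of \<delta> \<delta>b x0] by (auto simp: \<delta>_def)
      have x0in: "x0 \<in> chain_ball x0 \<delta>0" by (simp add: chain_ball_def chain_refl)
      have "dist (1 / f x0) (1 / f (s j)) \<le> K * dist x0 (s j)"
        using lipschitz_onD[OF K x0in in0] by simp
      also have "\<dots> \<le> K * B" using B inb K0 by (simp add: mult_left_mono)
      finally have "1 / f (s j) \<le> 1 / f x0 + K * B" by (simp add: dist_real_def)
      moreover have "real j + 1 \<le> 1 / f (s j)"
      proof -
        have "f (s j) * (real j + 1) \<le> 1" using fs[of j] by (simp add: field_simps)
        then show ?thesis using fpos[of "s j"] by (simp add: field_simps)
      qed
      ultimately show ?thesis by linarith
    qed
    obtain m :: nat where m: "1 / f x0 + K * B \<le> real m" using real_arch_simple by blast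
    obtain j where "j \<ge> m" "j \<in> N" using N infinite_nat_iff_unbounded_le by blast
    with bnd[of j] m show False by simp
  qed
qed

theorem mainTheorem4:
  shows "(cofinally_bourbaki_quasi_complete TYPE('a::metric_space)
           \<longleftrightarrow> (strongly_uniformly_locally_bounded TYPE('a)
                \<and> (\<forall>f::'a \<Rightarrow> real. (\<forall>x. f x \<noteq> 0) \<and> strongly_uniformly_locally_lipschitz f
                      \<longrightarrow> strongly_uniformly_locally_lipschitz (\<lambda>x. 1 / f x))))
       \<and> (cofinally_bourbaki_quasi_complete TYPE('a)
           \<longleftrightarrow> (strongly_uniformly_locally_bounded TYPE('a)
                \<and> (\<forall>f::'a \<Rightarrow> real. (\<forall>x. f x \<noteq> 0) \<and> (\<exists>K. K-lipschitz_on UNIV f)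
                      \<longrightarrow> strongly_uniformly_locally_lipschitz (\<lambda>x. 1 / f x))))"
proof -
  have lip_sull: "strongly_uniformly_locally_lipschitz f" if "K-lipschitz_on UNIV f" for K and f :: "'a \<Rightarrow> real"
    unfolding strongly_uniformly_locally_lipschitz_def
    using lipschitz_on_subset[OF that subset_UNIV] zero_less_one by blast
  have c2: "strongly_uniformly_locally_bounded TYPE('a)
                \<and> (\<forall>f::'a \<Rightarrow> real. (\<forall>x. f x \<noteq> 0) \<and> strongly_uniformly_locally_lipschitz f
                      \<longrightarrow> strongly_uniformly_locally_lipschitz (\<lambda>x. 1 / f x))"
    if c: "cofinally_bourbaki_quasi_complete TYPE('a)"
    using cbqc_sulb[OF c] cbqc_recip[OF c] by blast
  have c23: "(\<forall>f::'a \<Rightarrow> real. (\<forall>x. f x \<noteq> 0) \<and> (\<exists>K. K-lipschitz_on UNIV f)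
                      \<longrightarrow> strongly_uniformly_locally_lipschitz (\<lambda>x. 1 / f x))"
    if h: "\<forall>f::'a \<Rightarrow> real. (\<forall>x. f x \<noteq> 0) \<and> strongly_uniformly_locally_lipschitz f
                      \<longrightarrow> strongly_uniformly_locally_lipschitz (\<lambda>x. 1 / f x)"
    using h lip_sull by blast
  show ?thesis using c2 c23 three_to_one by metis
qed

end
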